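(* Fix $\lambda$ and let $r_1,\ldots,r_n$ be i.i.d. real random variables with CDF $F_\lambda$ and density $f_\lambda$, with empirical CDF $\hat F_{n,\lambda}$. Assume $r_i\in[a,b]$ almost surely for some $-\infty<a<b<\infty$, with $\inf_{r\in[a,b]}f_\lambda(r)>0$ and $\sup_{r\in[a,b]}f'_\lambda(r)<\infty$. Let $\psi(y)=\int_0^y\psi'(z)\,dz$ define a probability measure on $[0,1]$, where $\psi'$ is bounded and continuous at $F_\lambda(r)$ for Lebesgue-almost every $r$. Let $$\sigma^2(\lambda)=\int_0^1\!\!\int_0^1\frac{p\wedge p'-pp'}{f_\lambda(F_\lambda^{-1}(p))\,f_\lambda(F_\lambda^{-1}(p'))}\,d\psi(p)\,d\psi(p')$$ and $$\hat\sigma_n^2(\lambda)=\int_a^b\!\!\int_a^b\psi'(\hat F_{n,\lambda}(r))\,\psi'(\hat F_{n,\lambda}(\tilde r))\,\big(\hat F_{n,\lambda}(r\wedge\tilde r)-\hat F_{n,\lambda}(r)\hat F_{n,\lambda}(\tilde r)\big)\,dr\,d\tilde r.$$ Then $\hat\sigma_n^2(\lambda)\to\sigma^2(\lambda)$ almost surely as $n\to\infty$.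
   Context: $F^{-1}(p)=\inf\{x:F(x)\ge p\}$ denotes the $p$-th quantile of a distribution function $F$. *)

theory Defs
  imports "HOL-Probability.Probability"
begin

definition quantile :: "(real \<Rightarrow> real) \<Rightarrow> real \<Rightarrow> real" where
  "quantile F p = Inf {x. p \<le> F x}"

definition ecdf :: "(nat \<Rightarrow> 'a \<Rightarrow> real) \<Rightarrow> nat \<Rightarrow> 'a \<Rightarrow> real \<Rightarrow> real" where
  "ecdf X n \<omega> r = real (card {i \<in> {..<n}. X i \<omega> \<le> r}) / real n"

text \<open>Asymptotic variance sigma^2 with d psi(p) = psi' p dp.\<close>
definition sigma2 :: "(real \<Rightarrow> real) \<Rightarrow> (real \<Rightarrow> real) \<Rightarrow> (real \<Rightarrow> real) \<Rightarrow> real" where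
  "sigma2 F f psi' =
     (LBINT p:{0..1}. LBINT p':{0..1}.
        (min p p' - p * p') / (f (quantile F p) * f (quantile F p')) * psi' p * psi' p')"

definition sigma2_hat :: "(nat \<Rightarrow> 'a \<Rightarrow> real) \<Rightarrow> (real \<Rightarrow> real) \<Rightarrow> real \<Rightarrow> real \<Rightarrow> nat \<Rightarrow> 'a \<Rightarrow> real" where
  "sigma2_hat X psi' a b n \<omega> =
     (LBINT r:{a..b}. LBINT r':{a..b}.
        psi' (ecdf X n \<omega> r) * psi' (ecdf X n \<omega> r') *
        (ecdf X n \<omega> (min r r') - ecdf X n \<omega> r * ecdf X n \<omega> r'))"

end

theory Submission
  imports Defs
begin


lemma mono_rat_conv:
  fixes E :: "nat \<Rightarrow> real \<Rightarrow> real" and F :: "real \<Rightarrow> real"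
  assumes mono: "\<And>n. mono (E n)" and cont: "\<And>x. isCont F x"
    and conv: "\<And>q. q \<in> \<rat> \<Longrightarrow> (\<lambda>n. E n q) \<longlonglongrightarrow> F q"
  shows "(\<lambda>n. E n x) \<longlonglongrightarrow> F x"
proof (rule order_tendstoI)
  fix y assume y: "y < F x"
  have "\<forall>\<^sub>F t in at x. y < F t"
    using cont[of x] y by (simp add: isCont_def order_tendstoD(1))
  then obtain d where d: "d > 0" "\<And>t. t \<noteq> x \<Longrightarrow> dist t x < d \<Longrightarrow> y < F t"
    unfolding eventually_at by blast
  obtain q where q: "q \<in> \<rat>" "x - d < q" "q < x" using Rats_dense_in_real[of "x - d" x] d by auto
  have "y < F q" using d(2)[of q] q by (auto simp: dist_real_def)
  then have "\<forall>\<^sub>F n in sequentially. y < E n q" using conv[OF q(1)] by (simp add: order_tendstoD(1))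
  then show "\<forall>\<^sub>F n in sequentially. y < E n x"
    by eventually_elim (meson less_le_trans less_imp_le monoD mono q(3))
next
  fix y assume y: "F x < y"
  have "\<forall>\<^sub>F t in at x. F t < y"
    using cont[of x] y by (simp add: isCont_def order_tendstoD(2))
  then obtain d where d: "d > 0" "\<And>t. t \<noteq> x \<Longrightarrow> dist t x < d \<Longrightarrow> F t < y"
    unfolding eventually_at by blast
  obtain q where q: "q \<in> \<rat>" "x < q" "q < x + d" using Rats_dense_in_real[of x "x + d"] d by auto
  have "F q < y" using d(2)[of q] q by (auto simp: dist_real_def)
  then have "\<forall>\<^sub>F n in sequentially. E n q < y" using conv[OF q(1)] by (simp add: order_tendstoD(2))
  then show "\<forall>\<^sub>F n in sequentially. E n x < y"
    by eventually_elim (meson le_less_trans less_imp_le monoD mono q(2))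
qed

lemma dct_Icc:
  fixes s :: "nat \<Rightarrow> real \<Rightarrow> real" and g :: "real \<Rightarrow> real"
  assumes sm: "\<And>n. s n \<in> borel_measurable borel" and gm: "g \<in> borel_measurable borel"
    and lim: "AE x in lborel. x \<in> {a..b} \<longrightarrow> (\<lambda>n. s n x) \<longlonglongrightarrow> g x"
    and bnd: "\<And>n x. x \<in> {a..b} \<Longrightarrow> \<bar>s n x\<bar> \<le> C"
  shows "(\<lambda>n. LBINT x:{a..b}. s n x) \<longlonglongrightarrow> (LBINT x:{a..b}. g x)"
  unfolding set_lebesgue_integral_def
proof (rule integral_dominated_convergence[where w="\<lambda>x. C * indicator {a..b} x"])
  show "integrable lborel (\<lambda>x. C * indicator {a..b} x)"
    by (intro integrable_mult_right) (simp add: integrable_indicator_iff emeasure_lborel_Icc_eq)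
  show "AE x in lborel. (\<lambda>n. indicator {a..b} x *\<^sub>R s n x) \<longlonglongrightarrow> indicator {a..b} x *\<^sub>R g x"
    using lim by eventually_elim (auto simp: indicator_def)
  show "AE x in lborel. norm (indicator {a..b} x *\<^sub>R s n x) \<le> C * indicator {a..b} x" for n
    using bnd by (auto simp: indicator_def)
qed (use sm gm in auto)



lemma ecdf_slln:
  fixes M :: "'a measure" and X :: "nat \<Rightarrow> 'a \<Rightarrow> real"
  assumes P: "prob_space M" and rv: "\<And>i. X i \<in> borel_measurable M"
    and indep: "prob_space.indep_vars M (\<lambda>_. borel) X UNIV"
    and ident: "\<And>i. distr M borel (X i) = distr M borel (X 0)"
  shows "AE \<omega> in M. (\<lambda>n. ecdf X n \<omega> r) \<longlonglongrightarrow> measure M {\<omega>\<in>space M. X 0 \<omega> \<le> r}"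
proof -
  interpret prob_space M by (rule P)
  define Y :: "nat \<Rightarrow> 'a \<Rightarrow> real" where "Y i \<omega> = indicator {..r} (X i \<omega>)" for i \<omega>
  define \<mu> where "\<mu> = measure M {\<omega>\<in>space M. X 0 \<omega> \<le> r}"
  have Ym[measurable]: "Y i \<in> borel_measurable M" for i
    unfolding Y_def using rv[of i] by measurable
  have Yfun: "Y i = (\<lambda>\<omega>. indicator {..r} (X i \<omega>))" for i by (simp add: Y_def fun_eq_iff)
  have ecdf_eq: "ecdf X n \<omega> r = (\<Sum>i\<in>{..<n}. Y i \<omega>) / real n" for n \<omega>
  proof -
    have "(\<Sum>i\<in>{..<n}. Y i \<omega>) = (\<Sum>i\<in>{i \<in> {..<n}. X i \<omega> \<le> r}. 1)"
      by (simp add: Y_def indicator_def sum.If_cases Int_def)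
    also have "\<dots> = real (card {i \<in> {..<n}. X i \<omega> \<le> r})"
      by simp
    finally show ?thesis by (simp add: ecdf_def)
  qed
  have expY: "expectation (Y 0) = \<mu>"
  proof -
    have "expectation (Y 0) = expectation (indicator {\<omega>\<in>space M. X 0 \<omega> \<le> r})"
      by (intro Bochner_Integration.integral_cong) (auto simp: Y_def indicator_def)
    also have "\<dots> = \<mu>" unfolding \<mu>_def
    proof -
      have "{\<omega>\<in>space M. X 0 \<omega> \<le> r} \<in> sets M" using rv[of 0] by measurable
      then show "expectation (indicator {\<omega>\<in>space M. X 0 \<omega> \<le> r}) = measure M {\<omega>\<in>space M. X 0 \<omega> \<le> r}"
        unfolding Bochner_Integration.integral_indicator by (simp add: Int_absorb2)
    qed
    finally show ?thesis .
  qed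
  have indepY: "indep_vars (\<lambda>_. borel) Y UNIV"
    unfolding Y_def by (rule indep_vars_compose2[OF indep]) auto
  have distrY: "distr M borel (Y i) = distr M borel (Y 0)" for i
  proof -
    have *: "distr M borel (Y j) = distr (distr M borel (X j)) borel (indicator {..r})" for j
    proof -
      have "Y j = indicator {..r} \<circ> X j" by (simp add: Yfun comp_def)
      then show ?thesis
        using distr_distr[of "indicator {..r} :: real \<Rightarrow> real" borel borel "X j" M] rv[of j] by simp
    qed
    show ?thesis unfolding *[of i] *[of 0] ident[of i] ..
  qed
  have bound: "prob {\<omega>\<in>space M. \<bar>(\<Sum>i\<in>{..<n}. Y i \<omega>) / real n - \<mu>\<bar> \<ge> e} \<le> 2 * exp (-2 * e\<^sup>2) ^ n"
    if "e \<ge> 0" "n > 0" for e n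
  proof -
    interpret H: Hoeffding_ineq_iid M "{..<n}" Y "Y 0" 0 1 "expectation (Y 0)"
      by (unfold_locales; (rule distrY)?; (rule indep_vars_subset[OF indepY])?; auto simp: Y_def indicator_def)
    have "prob {\<omega>\<in>space M. \<bar>(\<Sum>i\<in>{..<n}. Y i \<omega>) / real (card {..<n}) - expectation (Y 0)\<bar> \<ge> e}
       \<le> 2 * exp (-2 * real (card {..<n}) * e\<^sup>2 / (1 - 0)\<^sup>2)"
      by (rule H.Hoeffding_ineq_abs_ge') (use that in auto)
    also have "exp (-2 * real (card {..<n}) * e\<^sup>2 / (1 - 0)\<^sup>2) = exp (-2 * e\<^sup>2) ^ n"
      by (simp flip: exp_of_nat_mult add: mult_ac)
    finally show ?thesis by (simp add: expY)
  qed
  have ev: "AE \<omega> in M. eventually (\<lambda>n. \<bar>ecdf X n \<omega> r - \<mu>\<bar> < e) sequentially" if e: "e > 0" for e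
  proof -
    define A where "A n = {\<omega>\<in>space M. \<bar>(\<Sum>i\<in>{..<n}. Y i \<omega>) / real n - \<mu>\<bar> \<ge> e}" for n
    have Am: "A n \<in> sets M" for n unfolding A_def by measurable
    have "summable (\<lambda>n. 2 * exp (-2 * e\<^sup>2) ^ n)"
      by (intro summable_mult summable_geometric) (use e in simp)
    then have "summable (\<lambda>n. measure M (A n))"
    proof (rule summable_comparison_test[rotated])
      show "\<exists>N. \<forall>n\<ge>N. norm (measure M (A n)) \<le> 2 * exp (-2 * e\<^sup>2) ^ n"
        using bound[of e] e by (intro exI[of _ 1]) (auto simp: A_def)
    qed
    then have "AE \<omega> in M. eventually (\<lambda>n. \<omega> \<in> space M - A n) sequentially"
      by (intro borel_cantelli_AE1 Am) (auto simp: emeasure_eq_measure)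
    then show ?thesis
      by (rule eventually_mono) (auto elim!: eventually_mono simp: A_def ecdf_eq)
  qed
  have "AE \<omega> in M. \<forall>k::nat. eventually (\<lambda>n. \<bar>ecdf X n \<omega> r - \<mu>\<bar> < inverse (real (Suc k))) sequentially"
    by (subst AE_all_countable) (auto intro: ev)
  then show ?thesis
  proof (rule eventually_mono)
    fix \<omega> assume H: "\<forall>k::nat. eventually (\<lambda>n. \<bar>ecdf X n \<omega> r - \<mu>\<bar> < inverse (real (Suc k))) sequentially"
    show "(\<lambda>n. ecdf X n \<omega> r) \<longlonglongrightarrow> measure M {\<omega>\<in>space M. X 0 \<omega> \<le> r}"
      unfolding \<mu>_def[symmetric] tendsto_iff
    proof (intro allI impI)
      fix e :: real assume "e > 0"
      then obtain k where k: "inverse (real (Suc k)) < e" using reals_Archimedean by blast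
      show "eventually (\<lambda>n. dist (ecdf X n \<omega> r) \<mu> < e) sequentially"
        using H[rule_format, of k] by eventually_elim (use k in \<open>auto simp: dist_real_def\<close>)
    qed
  qed
qed



locale thm4_setup =
  fixes M :: "'a measure" and X :: "nat \<Rightarrow> 'a \<Rightarrow> real"
    and F f psi' :: "real \<Rightarrow> real" and a b :: real
  assumes P: "prob_space M"
    and rv: "\<And>i. X i \<in> borel_measurable M"
    and F_def: "F = cdf (distr M borel (X 0))"
    and f_nonneg: "\<And>x. f x \<ge> 0"
    and density: "distributed M lborel (X 0) (\<lambda>x. ennreal (f x))"
    and ab: "a < b"
    and support: "\<And>i. AE \<omega> in M. X i \<omega> \<in> {a..b}"
    and f_inf: "(INF r\<in>{a..b}. f r) > 0"
begin

abbreviation "nu \<equiv> distr M borel (X 0)"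

lemma nu_density: "nu = density lborel (\<lambda>x. ennreal (f x))"
proof -
  have "nu = distr M lborel (X 0)" by (rule distr_cong) auto
  then show ?thesis using distributed_distr_eq_density[OF density] by simp
qed

lemma f_meas[measurable]: "f \<in> borel_measurable borel"
proof -
  have "(\<lambda>x. ennreal (f x)) \<in> borel_measurable lborel"
    using distributed_borel_measurable[OF density] by simp
  then show ?thesis using f_nonneg by (simp add: borel_measurable_ennreal_iff)
qed

lemma real_distr_nu: "real_distribution nu"
  using prob_space.real_distribution_distr[OF P rv] by simp

lemma fm: "finite_measure nu"
  by (rule prob_space.finite_measure[OF real_distribution.axioms(1)[OF real_distr_nu]])

lemma fbm: "finite_borel_measure nu"
  by (rule real_distribution.finite_borel_measure_M[OF real_distr_nu])

lemma AE_nu: "AE x in nu. x \<in> {a..b}"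
  using support[of 0] rv[of 0] by (subst AE_distr_iff) auto

lemma nu_single: "measure nu {x} = 0"
proof -
  have "emeasure nu {x} = (\<integral>\<^sup>+y. ennreal (f y) * indicator {x} y \<partial>lborel)"
    unfolding nu_density by (subst emeasure_density) auto
  also have "\<dots> = 0"
    by (subst nn_integral_indicator_singleton) auto
  finally show ?thesis by (simp add: measure_def)
qed

lemma F_cdf: "F x = measure nu {..x}"
  by (simp add: F_def cdf_def)

lemma F_cont: "isCont F x"
  unfolding F_def using finite_borel_measure.isCont_cdf[OF fbm] nu_single by simp

lemma F_mono: "mono F"
  unfolding F_def mono_def using finite_borel_measure.cdf_nondecreasing[OF fbm] by blast

lemma F_nonneg: "0 \<le> F x" and F_le1: "F x \<le> 1"
  unfolding F_def using finite_borel_measure.cdf_nonneg[OF fbm] 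
    real_distribution.cdf_bounded_prob[OF real_distr_nu] by auto

lemma F_below: "x < a \<Longrightarrow> F x = 0"
  unfolding F_cdf by (subst measure_eq_AE[where B="{}"]) (auto intro!: eventually_mono[OF AE_nu])

lemma F_above: "b \<le> x \<Longrightarrow> F x = 1"
proof -
  assume x: "b \<le> x"
  have "measure nu {..x} = measure nu UNIV"
    using x by (intro measure_eq_AE) (auto intro!: eventually_mono[OF AE_nu])
  also have "\<dots> = 1" using prob_space.prob_space[OF real_distribution.axioms(1)[OF real_distr_nu]] by simp
  finally show ?thesis by (simp add: F_cdf)
qed

definition "c0 = (INF r\<in>{a..b}. f r)"

lemma f_ge: "x \<in> {a..b} \<Longrightarrow> c0 \<le> f x"
  unfolding c0_def by (rule cINF_lower) (auto intro!: bdd_belowI[of _ 0] f_nonneg)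

lemma f_pos: "x \<in> {a..b} \<Longrightarrow> 0 < f x"
  using f_ge f_inf c0_def by (metis less_le_trans)

lemma F_strict: assumes "a \<le> x" "x < y" "y \<le> b" shows "F x < F y"
proof -
  have "F y - F x = measure nu {x<..y}"
    unfolding F_def using real_distribution.finite_borel_measure_M[OF real_distr_nu] assms
    by (simp add: finite_borel_measure.cdf_diff_eq)
  moreover have "emeasure nu {x<..y} > 0"
  proof -
    have "ennreal (c0 * (y - x)) = (\<integral>\<^sup>+t. ennreal c0 * indicator {x<..y} t \<partial>lborel)"
      using assms f_inf c0_def by (simp add: nn_integral_cmult_indicator ennreal_mult)
    also have "\<dots> \<le> (\<integral>\<^sup>+t. ennreal (f t) * indicator {x<..y} t \<partial>lborel)"
      using assms f_ge by (intro nn_integral_mono) (auto simp: indicator_def ennreal_leI)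
    also have "\<dots> = emeasure nu {x<..y}"
      unfolding nu_density by (subst emeasure_density) auto
    finally show ?thesis using assms f_inf c0_def
      by (metis ennreal_eq_0_iff diff_gt_0_iff_gt le_zero_eq linorder_not_less mult_pos_pos)
  qed
  ultimately show ?thesis
    by (simp add: finite_measure.emeasure_eq_measure[OF fm])
qed

lemma Q_F: assumes "x \<in> {a<..b}" shows "quantile F (F x) = x"
proof -
  have Fa: "F a < F x" using F_strict[of a x] assms by auto
  have "{y. F x \<le> F y} = {x..}"
  proof safe
    fix y assume y: "F x \<le> F y"
    show "x \<le> y"
    proof (rule ccontr)
      assume "\<not> x \<le> y"
      then have "y < x" by simp
      show False
      proof (cases "y < a")
        case True then show False using F_below[of y] F_nonneg[of a] Fa y by simp
      next
        case False then show False using F_strict[of y x] \<open>y < x\<close> assms y by auto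
      qed
    qed
  next
    fix y assume "x \<le> y" then show "F x \<le> F y" using F_mono by (simp add: monoD)
  qed
  then show ?thesis by (simp add: quantile_def)
qed


lemma F_meas[measurable]: "F \<in> borel_measurable borel"
  using F_mono borel_measurable_mono by blast

lemma f_zero_outside: "AE x in lborel. x \<notin> {a..b} \<longrightarrow> f x = 0"
proof -
  have "emeasure nu (-{a..b}) = emeasure nu {}"
    by (intro emeasure_eq_AE) (auto intro!: eventually_mono[OF AE_nu])
  then have "(\<integral>\<^sup>+x. ennreal (f x) * indicator (-{a..b}) x \<partial>lborel) = 0"
    unfolding nu_density by (subst (asm) emeasure_density) auto
  then have "AE x in lborel. ennreal (f x) * indicator (-{a..b}) x = 0"
    by (subst (asm) nn_integral_0_iff_AE) auto
  then show ?thesis by (rule eventually_mono) (auto simp: indicator_def f_nonneg)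
qed

lemma Q_meas[measurable]: "quantile F \<in> borel_measurable borel"
proof (rule borel_measurable_piecewise_mono[of "{{..0}, {0<..1}, {1<..}}"])
  show "\<Union>{{..0::real}, {0<..1}, {1<..}} = UNIV" by auto
  show "mono_on c (quantile F)" if "c \<in> {{..0}, {0<..1}, {1<..}}" for c
  proof -
    have "mono_on {..0} (quantile F)"
    proof (rule mono_onI)
      fix p q :: real assume "p \<in> {..0}" "q \<in> {..0}" 
      then have "{x. p \<le> F x} = UNIV" "{x. q \<le> F x} = UNIV" using F_nonneg
        by (auto intro: order_trans)
      then show "quantile F p \<le> quantile F q" by (simp add: quantile_def)
    qed
    moreover have "mono_on {1<..} (quantile F)"
    proof (rule mono_onI)
      fix p q :: real assume pq: "p \<in> {1<..}" "q \<in> {1<..}" 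
      have "\<not> p \<le> F x" "\<not> q \<le> F x" for x using F_le1[of x] pq by auto
      then have "{x. p \<le> F x} = {}" "{x. q \<le> F x} = {}" by auto
      then show "quantile F p \<le> quantile F q" by (simp add: quantile_def)
    qed
    moreover have "mono_on {0<..1} (quantile F)"
    proof (rule mono_onI)
      fix p q :: real assume pq: "p \<in> {0<..1}" "q \<in> {0<..1}" "p \<le> q"
      show "quantile F p \<le> quantile F q" unfolding quantile_def
      proof (rule cInf_superset_mono)
        show "{x. q \<le> F x} \<noteq> {}" using pq F_above[of b] by (auto intro!: exI[of _ b])
        show "bdd_below {x. p \<le> F x}"
        proof (rule bdd_belowI)
          fix x assume "x \<in> {x. p \<le> F x}"
          then show "a \<le> x" using pq F_below[of x] by (cases "x < a") auto
        qed
        show "{x. q \<le> F x} \<subseteq> {x. p \<le> F x}" using pq by auto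
      qed
    qed
    ultimately show ?thesis using that by auto
  qed
qed auto

lemma F_cont_on: "continuous_on S F"
  using F_cont by (simp add: continuous_at_imp_continuous_on)

lemma F_preimage: "measure nu {x. F x \<le> p} = max 0 (min p 1)"
proof -
  consider "p < 0" | "1 \<le> p" | "0 \<le> p" "p < 1" by linarith
  then show ?thesis
  proof cases
    case 1
    have "\<not> F x \<le> p" for x using F_nonneg[of x] 1 by linarith
    then have "{x. F x \<le> p} = {}" by auto
    then show ?thesis using 1 by simp
  next
    case 2
    have "F x \<le> p" for x using F_le1[of x] 2 by linarith
    then have "{x. F x \<le> p} = UNIV" by auto
    then show ?thesis using 2 prob_space.prob_space[OF real_distribution.axioms(1)[OF real_distr_nu]] by simp
  next
    case 3
    define S where "S = {x. F x \<le> p}"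
    define s where "s = Sup S"
    have "a - 1 \<in> S" using F_below[of "a - 1"] 3 by (auto simp: S_def)
    then have ne: "S \<noteq> {}" by blast
    have bdd: "bdd_above S"
    proof (rule bdd_aboveI)
      fix x assume "x \<in> S" then show "x \<le> b" using F_above[of x] 3 by (cases "b \<le> x") (auto simp: S_def)
    qed
    have cl: "closed S" unfolding S_def
      by (intro closed_Collect_le F_cont_on continuous_on_const)
    have sS: "s \<in> S" unfolding s_def using closed_contains_Sup[OF ne bdd cl] .
    have Seq: "S = {..s}"
    proof safe
      fix x assume "x \<in> S" then show "x \<le> s" unfolding s_def using bdd by (rule cSup_upper)
    next
      fix x assume "x \<le> s" then have "F x \<le> F s" using F_mono by (simp add: monoD)
      then show "x \<in> S" using sS by (simp add: S_def)
    qed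
    obtain t where t: "a - 1 \<le> t" "t \<le> b" "F t = p"
      using IVT'[of F "a - 1" p b] F_below[of "a - 1"] F_above[of b] 3 ab F_cont_on by auto
    have "t \<in> S" using t by (simp add: S_def)
    then have "t \<le> s" using Seq by auto
    then have "F t \<le> F s" using F_mono by (simp add: monoD)
    then have "F s = p" using sS t by (simp add: S_def)
    then show ?thesis using Seq 3 by (simp add: S_def F_cdf)
  qed
qed

definition "U = density lborel (\<lambda>x. ennreal (indicator {0..1::real} x))"

lemma rdU: "real_distribution U"
proof -
  have "emeasure U UNIV = emeasure lborel {0..1::real}"
    unfolding U_def by (subst emeasure_density) (auto simp: ennreal_indicator)
  then have "prob_space U" by (intro prob_spaceI) (simp add: U_def)
  then show ?thesis unfolding real_distribution_def real_distribution_axioms_def by (simp add: U_def)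
qed

lemma cdf_U: "cdf U p = max 0 (min p 1)"
proof -
  have e1: "emeasure U {..p} = emeasure lborel ({0..1} \<inter> {..p})"
    unfolding U_def by (subst emeasure_density) (auto simp flip: nn_integral_indicator intro!: nn_integral_cong simp: indicator_def)
  consider "p < 0" | "1 \<le> p" | "0 \<le> p" "p < 1" by linarith
  then have "emeasure lborel ({0..1} \<inter> {..p}) = ennreal (max 0 (min p 1))"
  proof cases
    case 1 then have "{0..1} \<inter> {..p} = {}" by auto
    then show ?thesis using 1 by simp
  next
    case 2 then have "{0..1} \<inter> {..p} = {0..1}" by auto
    then show ?thesis using 2 by simp
  next
    case 3 then have "{0..1} \<inter> {..p} = {0..p}" by auto
    then show ?thesis using 3 by simp
  qed
  then have "emeasure U {..p} = ennreal (max 0 (min p 1))" using e1 by simp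
  then show ?thesis by (cases "0 \<le> min p 1") (auto simp: cdf_def measure_def ennreal_neg)
qed

lemma distr_F: "distr nu borel F = U"
proof (rule cdf_unique)
  show "real_distribution (distr nu borel F)"
  proof -
    have "F \<in> borel_measurable nu" by simp
    then show ?thesis using prob_space.real_distribution_distr[OF real_distribution.axioms(1)[OF real_distr_nu]] 
      by simp
  qed
  show "real_distribution U" by (rule rdU)
  show "cdf (distr nu borel F) = cdf U"
  proof
    fix p
    have "cdf (distr nu borel F) p = measure nu (F -` {..p} \<inter> space nu)"
      unfolding cdf_def by (subst measure_distr) auto
    also have "F -` {..p} \<inter> space nu = {x. F x \<le> p}" by auto
    finally show "cdf (distr nu borel F) p = cdf U p" using F_preimage cdf_U by simp
  qed
qed

lemma PIT:
  assumes h[measurable]: "h \<in> borel_measurable borel"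
  shows "(LBINT p:{0..1}. h p) = (LBINT r:{a..b}. f r * h (F r))"
proof -
  have "(LBINT p:{0..1}. h p) = integral\<^sup>L U h"
    unfolding U_def set_lebesgue_integral_def by (rule integral_density[symmetric]) auto
  also have "\<dots> = integral\<^sup>L nu (\<lambda>x. h (F x))"
    unfolding distr_F[symmetric] by (rule integral_distr) auto
  also have "\<dots> = (LINT x|lborel. f x *\<^sub>R h (F x))"
    unfolding nu_density by (rule integral_density) (auto simp: f_nonneg)
  also have "\<dots> = (LBINT r:{a..b}. f r * h (F r))"
  proof -
    have *: "AE x in lborel. f x *\<^sub>R h (F x) = indicator {a..b} x *\<^sub>R (f x * h (F x))"
      using f_zero_outside by eventually_elim (auto simp: indicator_def)
    show ?thesis unfolding set_lebesgue_integral_def by (rule integral_cong_AE[OF _ _ *]) measurable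
  qed
  finally show ?thesis .
qed

end


lemma meas_inner:
  fixes g :: "real \<Rightarrow> real \<Rightarrow> real"
  assumes "(\<lambda>(x,y). g x y) \<in> borel_measurable (borel \<Otimes>\<^sub>M borel)"
  shows "(\<lambda>x. LBINT y:{a..b}. g x y) \<in> borel_measurable borel"
proof -
  have "(\<lambda>(x,y). indicator {a..b} y *\<^sub>R g x y) \<in> borel_measurable (borel \<Otimes>\<^sub>M borel)"
    using assms by measurable
  then have "(\<lambda>(x,y). indicator {a..b} y *\<^sub>R g x y) \<in> borel_measurable (borel \<Otimes>\<^sub>M lborel)"
    by (subst measurable_cong_sets[OF sets_pair_measure_cong[OF refl sets_lborel] refl]) 
  then have "(\<lambda>x. integral\<^sup>L lborel (\<lambda>y. indicator {a..b} y *\<^sub>R g x y)) \<in> borel_measurable borel"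
    by (rule lborel.borel_measurable_lebesgue_integral)
  then show ?thesis by (simp add: set_lebesgue_integral_def)
qed

lemma abs_LBINT_le:
  fixes g :: "real \<Rightarrow> real"
  assumes gm: "g \<in> borel_measurable borel" and bnd: "\<And>x. x \<in> {a..b} \<Longrightarrow> \<bar>g x\<bar> \<le> C" and ab: "a \<le> b"
  shows "\<bar>LBINT x:{a..b}. g x\<bar> \<le> C * (b - a)"
proof -
  have int1: "integrable lborel (\<lambda>x. indicator {a..b} x *\<^sub>R g x)"
    by (rule integrableI_bounded_set_indicator[where B=C]) (use gm bnd in \<open>auto simp: emeasure_lborel_Icc_eq\<close>)
  have "norm (integral\<^sup>L lborel (\<lambda>x. indicator {a..b} x *\<^sub>R g x)) \<le> integral\<^sup>L lborel (\<lambda>x. norm (indicator {a..b} x *\<^sub>R g x))"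
    by (rule integral_norm_bound)
  also have "\<dots> \<le> integral\<^sup>L lborel (\<lambda>x. C * indicator {a..b} x)"
  proof (rule integral_mono)
    show "integrable lborel (\<lambda>x. norm (indicator {a..b} x *\<^sub>R g x))"
      using int1 by (rule integrable_norm)
    show "integrable lborel (\<lambda>x. C * indicator {a..b} x)"
      by (intro integrable_mult_right) (simp add: integrable_indicator_iff emeasure_lborel_Icc_eq)
    show "norm (indicator {a..b} x *\<^sub>R g x) \<le> C * indicator {a..b} x" for x
      using bnd[of x] by (auto simp: indicator_def)
  qed
  also have "\<dots> = C * (b - a)" using ab by simp
  finally show ?thesis by (simp add: set_lebesgue_integral_def)
qed

theorem theorem4:
  fixes M :: "'a measure" and X :: "nat \<Rightarrow> 'a \<Rightarrow> real"
    and F f f' psi' :: "real \<Rightarrow> real" and a b :: real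
  assumes "prob_space M"
    and rv: "\<And>i. X i \<in> borel_measurable M"
    and indep: "prob_space.indep_vars M (\<lambda>_. borel) X UNIV"
    and ident: "\<And>i. distr M borel (X i) = distr M borel (X 0)"
    and F_def: "F = cdf (distr M borel (X 0))"
    and f_nonneg: "\<And>x. f x \<ge> 0"
    and density: "distributed M lborel (X 0) (\<lambda>x. ennreal (f x))"
    and ab: "a < b"
    and support: "\<And>i. AE \<omega> in M. X i \<omega> \<in> {a..b}"
    and f_inf: "(INF r\<in>{a..b}. f r) > 0"
    and f_deriv: "\<And>r. r \<in> {a..b} \<Longrightarrow> (f has_real_derivative f' r) (at r within {a..b})"
    and f'_sup: "bdd_above (f' ` {a..b})"
    and psi'_meas: "psi' \<in> borel_measurable borel"
    and psi'_nonneg: "\<And>z. z \<in> {0..1} \<Longrightarrow> psi' z \<ge> 0"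
    and psi'_int: "set_integrable lborel {0..1} psi'"
    and psi'_prob: "(LBINT z:{0..1}. psi' z) = 1"
    and psi'_bdd: "\<exists>B. \<forall>z\<in>{0..1}. \<bar>psi' z\<bar> \<le> B"
    and psi'_cont: "AE r in lborel. continuous (at (F r) within {0..1}) psi'"
  shows "AE \<omega> in M. (\<lambda>n. sigma2_hat X psi' a b n \<omega>) \<longlonglongrightarrow> sigma2 F f psi'"
  proof -
  interpret thm4_setup M X F f psi' a b
    using assms(1,2,5,6,7,8,9,10) unfolding thm4_setup_def by blast
  note P = assms(1) and rv = assms(2) and indep = assms(3) and ident = assms(4)
  obtain B where B: "\<forall>z\<in>{0..1}. \<bar>psi' z\<bar> \<le> B" using psi'_bdd by blast
  have B0: "0 \<le> B" using B by (metis abs_ge_zero atLeastAtMost_iff order_trans zero_le_one order_refl)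
  note [measurable] = psi'_meas
  define G where "G r r' = psi' (F r) * psi' (F r') * (F (min r r') - F r * F r')" for r r'
  have Gm[measurable]: "(\<lambda>(r, r'). G r r') \<in> borel_measurable (borel \<Otimes>\<^sub>M borel)"
    unfolding G_def by measurable
  have sig: "sigma2 F f psi' = (LBINT r:{a..b}. LBINT r':{a..b}. G r r')"
  proof -
    define K where "K p p' = (min p p' - p * p') / (f (quantile F p) * f (quantile F p')) * psi' p * psi' p'" for p p'
    define J where "J p r' = (min p (F r') - p * F r') / f (quantile F p) * psi' p * psi' (F r')" for p r'
    have Km[measurable]: "(\<lambda>(p, p'). K p p') \<in> borel_measurable (borel \<Otimes>\<^sub>M borel)"
      unfolding K_def by measurable
    have Jm[measurable]: "(\<lambda>(p, r'). J p r') \<in> borel_measurable (borel \<Otimes>\<^sub>M borel)"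
      unfolding J_def by measurable
    have inner: "(LBINT p':{0..1}. K p p') = (LBINT r':{a..b}. J p r')" for p
    proof -
      have "(LBINT p':{0..1}. K p p') = (LBINT r':{a..b}. f r' * K p (F r'))"
        by (rule PIT) (unfold K_def, measurable)
      also have "\<dots> = (LBINT r':{a..b}. J p r')"
      proof (rule set_lebesgue_integral_cong_AE)
        show "(\<lambda>r'. f r' * K p (F r')) \<in> borel_measurable lborel" unfolding K_def by measurable
        show "(\<lambda>r'. J p r') \<in> borel_measurable lborel" unfolding J_def by measurable
        show "AE r'\<in>{a..b} in lborel. f r' * K p (F r') = J p r'"
          using AE_lborel_singleton[of a]
        proof eventually_elim
          case (elim r')
          show ?case
          proof
            assume "r' \<in> {a..b}"
            then have r': "r' \<in> {a<..b}" using elim by auto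
            then have fr: "f r' > 0" using f_pos by auto
            show "f r' * K p (F r') = J p r'"
              unfolding K_def J_def Q_F[OF r'] using fr by (cases "f (quantile F p) = 0") (simp_all add: field_simps)
          qed
        qed
      qed simp
      finally show ?thesis .
    qed
    have "sigma2 F f psi' = (LBINT p:{0..1}. LBINT p':{0..1}. K p p')"
      unfolding sigma2_def K_def by simp
    also have "\<dots> = (LBINT p:{0..1}. LBINT r':{a..b}. J p r')"
      by (simp only: inner)
    also have "\<dots> = (LBINT r:{a..b}. f r * (LBINT r':{a..b}. J (F r) r'))"
      by (rule PIT) (rule meas_inner, measurable)
    also have "\<dots> = (LBINT r:{a..b}. LBINT r':{a..b}. G r r')"
    proof (rule set_lebesgue_integral_cong_AE)
      show "(\<lambda>r. f r * (LBINT r':{a..b}. J (F r) r')) \<in> borel_measurable lborel"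
      proof -
        have "(\<lambda>r. LBINT r':{a..b}. J (F r) r') \<in> borel_measurable borel"
          by (rule meas_inner) measurable
        then show ?thesis by measurable
      qed
      show "(\<lambda>r. LBINT r':{a..b}. G r r') \<in> borel_measurable lborel"
      proof -
        have "(\<lambda>r. LBINT r':{a..b}. G r r') \<in> borel_measurable borel"
          by (rule meas_inner) measurable
        then show ?thesis by measurable
      qed
      show "AE r\<in>{a..b} in lborel. f r * (LBINT r':{a..b}. J (F r) r') = (LBINT r':{a..b}. G r r')"
        using AE_lborel_singleton[of a]
      proof eventually_elim
        case (elim r)
        show ?case
        proof
          assume "r \<in> {a..b}"
          then have r: "r \<in> {a<..b}" using elim by auto
          then have fr: "f r > 0" using f_pos by auto
          have "f r * (LBINT r':{a..b}. J (F r) r') = (LBINT r':{a..b}. f r * J (F r) r')"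
            by (rule set_integral_mult_right[symmetric])
          also have "\<dots> = (LBINT r':{a..b}. G r r')"
            by (rule set_lebesgue_integral_cong)
              (use fr in \<open>auto simp: J_def G_def Q_F[OF r] min_of_mono[OF F_mono] field_simps\<close>)
          finally show "f r * (LBINT r':{a..b}. J (F r) r') = (LBINT r':{a..b}. G r r')" .
        qed
      qed
    qed simp
    finally show ?thesis .
  qed
  have Fq: "measure M {\<omega>\<in>space M. X 0 \<omega> \<le> r} = F r" for r
  proof -
    have "F r = measure M (X 0 -` {..r} \<inter> space M)"
      unfolding F_cdf using rv[of 0] by (subst measure_distr) auto
    also have "X 0 -` {..r} \<inter> space M = {\<omega>\<in>space M. X 0 \<omega> \<le> r}" by auto
    finally show ?thesis by simp
  qed
  have "AE \<omega> in M. \<forall>q::rat. (\<lambda>n. ecdf X n \<omega> (of_rat q)) \<longlonglongrightarrow> F (of_rat q)"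
    unfolding AE_all_countable using ecdf_slln[OF P rv indep ident] Fq by simp
  then have conv: "AE \<omega> in M. (\<lambda>n. sigma2_hat X psi' a b n \<omega>) \<longlonglongrightarrow> (LBINT r:{a..b}. LBINT r':{a..b}. G r r')"
  proof (rule eventually_mono)
    fix \<omega> assume H: "\<forall>q::rat. (\<lambda>n. ecdf X n \<omega> (of_rat q)) \<longlonglongrightarrow> F (of_rat q)"
    define E where "E n = ecdf X n \<omega>" for n
    have Emono: "mono (E n)" for n
    proof (rule monoI)
      fix x y :: real assume "x \<le> y"
      then have "card {i \<in> {..<n}. X i \<omega> \<le> x} \<le> card {i \<in> {..<n}. X i \<omega> \<le> y}"
        by (intro card_mono) auto
      then show "E n x \<le> E n y" unfolding E_def ecdf_def by (simp add: divide_right_mono)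
    qed
    have E01: "E n x \<in> {0..1}" for n x
    proof -
      have "card {i \<in> {..<n}. X i \<omega> \<le> x} \<le> card {..<n}" by (intro card_mono) auto
      then show ?thesis unfolding E_def ecdf_def by (cases "n = 0") (auto simp: divide_simps)
    qed
    have Econv: "(\<lambda>n. E n x) \<longlonglongrightarrow> F x" for x
    proof (rule mono_rat_conv[OF Emono F_cont])
      fix q :: real assume "q \<in> \<rat>"
      then obtain q' where "q = of_rat q'" by (auto elim: Rats_cases)
      then show "(\<lambda>n. E n q) \<longlonglongrightarrow> F q" using H unfolding E_def by simp
    qed
    have Em[measurable]: "E n \<in> borel_measurable borel" for n
      using Emono borel_measurable_mono by blast
    define S where "S n r r' = psi' (E n r) * psi' (E n r') * (E n (min r r') - E n r * E n r')" for n r r'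
    have Sm[measurable]: "(\<lambda>(r, r'). S n r r') \<in> borel_measurable (borel \<Otimes>\<^sub>M borel)" for n
      unfolding S_def by measurable
    have Sm1[measurable]: "(\<lambda>r'. S n r r') \<in> borel_measurable borel" for n r
      unfolding S_def by measurable
    have Gm1[measurable]: "(\<lambda>r'. G r r') \<in> borel_measurable borel" for r
      unfolding G_def by measurable
    have sh: "sigma2_hat X psi' a b n \<omega> = (LBINT r:{a..b}. LBINT r':{a..b}. S n r r')" for n
      unfolding sigma2_hat_def S_def E_def ..
    have psiB: "\<bar>psi' (E n x)\<bar> \<le> B" for n x using B E01 by blast
    have bndS: "\<bar>S n r r'\<bar> \<le> B * B" for n r r'
    proof -
      have "\<bar>E n (min r r') - E n r * E n r'\<bar> \<le> 1"
      proof -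
        have e: "0 \<le> E n r" "E n r \<le> 1" "0 \<le> E n r'" "E n r' \<le> 1" "0 \<le> E n (min r r')" "E n (min r r') \<le> 1"
          using E01[of n "min r r'"] E01[of n r] E01[of n r'] by auto
        then have p: "0 \<le> E n r * E n r'" "E n r * E n r' \<le> 1" by (auto intro: mult_le_one)
        show ?thesis unfolding abs_le_iff using e p by linarith
      qed
      then have "\<bar>psi' (E n r)\<bar> * \<bar>psi' (E n r')\<bar> * \<bar>E n (min r r') - E n r * E n r'\<bar> \<le> B * B * 1"
        using psiB B0 by (intro mult_mono) auto
      then show ?thesis by (simp add: S_def abs_mult)
    qed
    have Slim: "(\<lambda>n. S n r r') \<longlonglongrightarrow> G r r'"
      if "continuous (at (F r) within {0..1}) psi'" "continuous (at (F r') within {0..1}) psi'" for r r'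
      unfolding S_def G_def
      by (intro tendsto_intros continuous_within_tendsto_compose'[OF that(1)]
          continuous_within_tendsto_compose'[OF that(2)] Econv E01)
    have inner: "(\<lambda>n. LBINT r':{a..b}. S n r r') \<longlonglongrightarrow> (LBINT r':{a..b}. G r r')"
      if "continuous (at (F r) within {0..1}) psi'" for r
    proof (rule dct_Icc[where C="B * B"])
      show "AE x in lborel. x \<in> {a..b} \<longrightarrow> (\<lambda>n. S n r x) \<longlonglongrightarrow> G r x"
        using psi'_cont by eventually_elim (use Slim that in blast)
    qed (use bndS in auto)
    show "(\<lambda>n. sigma2_hat X psi' a b n \<omega>) \<longlonglongrightarrow> (LBINT r:{a..b}. LBINT r':{a..b}. G r r')"
      unfolding sh
    proof (rule dct_Icc[where C="B * B * (b - a)"])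
      show "(\<lambda>r. LBINT r':{a..b}. S n r r') \<in> borel_measurable borel" for n
        by (rule meas_inner) measurable
      show "(\<lambda>r. LBINT r':{a..b}. G r r') \<in> borel_measurable borel"
        by (rule meas_inner) measurable
      show "AE x in lborel. x \<in> {a..b} \<longrightarrow> (\<lambda>n. LBINT r':{a..b}. S n x r') \<longlonglongrightarrow> (LBINT r':{a..b}. G x r')"
        using psi'_cont by eventually_elim (use inner in blast)
      show "\<bar>LBINT r':{a..b}. S n x r'\<bar> \<le> B * B * (b - a)" for n x
        by (rule abs_LBINT_le) (use bndS ab in auto)
    qed
  qed
  show ?thesis using conv unfolding sig .
qed

end
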